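(* Let $k\ge 2$ and let $G$ be a graph with no cycle of length $2k+1$. Let $V(G)=V_1\cup V_2\cup V_3$ be a partition into three parts. Let $G'$ be the graph on $V(G)$ whose edges are those edges of $G$ that lie in some triangle of $G$ having exactly one vertex in each of $V_1,V_2,V_3$. For $1\le i<j\le 3$ let $G_{ij}$ be the bipartite subgraph of $G'$ consisting of the edges of $G'$ with one end in $V_i$ and the other in $V_j$. Then each $G_{ij}$ contains no cycle of length $2k$.
   Context: All graphs are simple; a cycle of length $m$ is a (not necessarily induced) subgraph isomorphic to $C_m$. *)

theory Defs
  imports Main
begin

definition simple_graph :: "'a set \<Rightarrow> ('a \<Rightarrow> 'a \<Rightarrow> bool) \<Rightarrow> bool" where
  "simple_graph V E \<longleftrightarrow> finite V \<and> (\<forall>u v. E u v \<longrightarrow> E v u) \<and> (\<forall>u. \<not> E u u)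
     \<and> (\<forall>u v. E u v \<longrightarrow> u \<in> V \<and> v \<in> V)"

definition has_cycle :: "'a set \<Rightarrow> ('a \<Rightarrow> 'a \<Rightarrow> bool) \<Rightarrow> nat \<Rightarrow> bool" where
  "has_cycle V E m \<longleftrightarrow> m \<ge> 3 \<and> (\<exists>f. inj_on f {..<m} \<and> f ` {..<m} \<subseteq> V
     \<and> (\<forall>i<m. E (f i) (f (Suc i mod m))))"

definition is_partition3 :: "'a set \<Rightarrow> (nat \<Rightarrow> 'a set) \<Rightarrow> bool" where
  "is_partition3 V P \<longleftrightarrow> P 1 \<union> P 2 \<union> P 3 = V
     \<and> P 1 \<inter> P 2 = {} \<and> P 1 \<inter> P 3 = {} \<and> P 2 \<inter> P 3 = {}"

definition crossing_tri_edges :: "('a \<Rightarrow> 'a \<Rightarrow> bool) \<Rightarrow> (nat \<Rightarrow> 'a set) \<Rightarrow> 'a \<Rightarrow> 'a \<Rightarrow> bool" where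
  "crossing_tri_edges E P u v \<longleftrightarrow> E u v \<and> (\<exists>w. E u w \<and> E v w
     \<and> (\<forall>i\<in>{1,2,3}. card ({u, v, w} \<inter> P i) = 1))"

definition bip_part :: "('a \<Rightarrow> 'a \<Rightarrow> bool) \<Rightarrow> (nat \<Rightarrow> 'a set) \<Rightarrow> nat \<Rightarrow> nat \<Rightarrow> 'a \<Rightarrow> 'a \<Rightarrow> bool" where
  "bip_part E' P i j u v \<longleftrightarrow> E' u v \<and> ((u \<in> P i \<and> v \<in> P j) \<or> (u \<in> P j \<and> v \<in> P i))"

end

theory Submission
  imports Defs
begin

lemma w_out:
  assumes part: "is_partition3 V P" and ij: "1 \<le> i" "i < j" "j \<le> (3::nat)"
    and uv: "u \<in> P i \<union> P j" "v \<in> P i \<union> P j"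
    and c: "\<forall>l\<in>{1,2,3}. card ({u, v, w} \<inter> P l) = 1"
  shows "w \<notin> P i \<union> P j"
proof -
  have cases: "(i = 1 \<and> j = 2) \<or> (i = 1 \<and> j = 3) \<or> (i = 2 \<and> j = 3)" using ij by auto
  obtain l where l: "l \<in> {1,2,3}" "P l \<inter> (P i \<union> P j) = {}"
    using cases part unfolding is_partition3_def
    by (metis Int_Un_distrib Int_commute insertCI sup_bot.right_neutral)
  have "card ({u, v, w} \<inter> P l) = 1" using c l(1) by blast
  then have "{u, v, w} \<inter> P l \<noteq> {}" by force
  then obtain x where x: "x \<in> {u,v,w}" "x \<in> P l" by blast
  have "x \<noteq> u" "x \<noteq> v" using x(2) uv l(2) by blast+
  then have "w \<in> P l" using x by blast
  then show ?thesis using l(2) by blast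
qed

theorem mainTheorem4:
  fixes V :: "'a set" and E :: "'a \<Rightarrow> 'a \<Rightarrow> bool" and P :: "nat \<Rightarrow> 'a set" and k :: nat
  assumes "k \<ge> 2"
    and "simple_graph V E"
    and "\<not> has_cycle V E (2 * k + 1)"
    and "is_partition3 V P"
  shows "\<forall>i j. 1 \<le> i \<and> i < j \<and> j \<le> 3 \<longrightarrow>
           \<not> has_cycle V (bip_part (crossing_tri_edges E P) P i j) (2 * k)"
proof (intro allI impI notI)
  fix i j :: nat
  assume ij: "1 \<le> i \<and> i < j \<and> j \<le> 3"
  assume "has_cycle V (bip_part (crossing_tri_edges E P) P i j) (2 * k)"
  then obtain f where inj: "inj_on f {..<2*k}" and fV: "f ` {..<2*k} \<subseteq> V"
    and ed: "\<forall>n<2*k. bip_part (crossing_tri_edges E P) P i j (f n) (f (Suc n mod (2*k)))"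
    unfolding has_cycle_def by blast
  have sg: "\<forall>u v. E u v \<longrightarrow> E v u" "\<forall>u v. E u v \<longrightarrow> u \<in> V \<and> v \<in> V"
    using assms(2) unfolding simple_graph_def by auto
  have inP: "f n \<in> P i \<union> P j" if "n < 2*k" for n
    using ed that unfolding bip_part_def by blast
  have E: "E (f n) (f (Suc n mod (2*k)))" if "n < 2*k" for n
    using ed that unfolding bip_part_def crossing_tri_edges_def by blast
  have m1: "Suc 0 mod (2*k) = 1" using assms(1) by simp
  have "crossing_tri_edges E P (f 0) (f 1)" using ed[rule_format, of 0] assms(1) m1
    unfolding bip_part_def by auto
  then obtain w where w: "E (f 0) w" "E (f 1) w" "\<forall>l\<in>{1,2,3}. card ({f 0, f 1, w} \<inter> P l) = 1"
    unfolding crossing_tri_edges_def by blast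
  have wout: "w \<notin> P i \<union> P j"
    using w_out[OF assms(4), of i j "f 0" "f 1" w] ij inP[of 0] inP[of 1] assms(1) w(3) by auto
  have wf: "w \<noteq> f n" if "n < 2*k" for n using wout inP[OF that] by blast
  define g where "g n = (if n = 0 then f 0 else if n = 1 then w else f (n - 1))" for n
  have "has_cycle V E (2 * k + 1)"
    unfolding has_cycle_def
  proof (intro conjI exI[of _ g])
    show "3 \<le> 2 * k + 1" using assms(1) by simp
    show "inj_on g {..<2 * k + 1}"
    proof (rule inj_onI)
      fix a b assume a: "a \<in> {..<2 * k + 1}" and b: "b \<in> {..<2 * k + 1}" and gab: "g a = g b"
      show "a = b"
      proof (cases "a = 1 \<or> b = 1")
        case True
        have w0: "w \<noteq> f 0" using wf assms(1) by simp
        have wa: "w \<noteq> f (x - 1)" if "x < 2*k+1" "x \<noteq> 0" for x using wf that by simp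
        show ?thesis
        proof (rule ccontr)
          assume ne: "a \<noteq> b"
          show False
          proof (cases "a = 1")
            case True
            then have "b \<noteq> 1" using ne by simp
            then have "g b = (if b = 0 then f 0 else f (b - 1))" unfolding g_def by simp
            moreover have "g a = w" using True unfolding g_def by simp
            ultimately have "w = (if b = 0 then f 0 else f (b - 1))" using gab by simp
            then show False using w0 wa[of b] b by (simp split: if_splits)
          next
            case False
            then have "b = 1" using \<open>a = 1 \<or> b = 1\<close> by simp
            then have "g a = (if a = 0 then f 0 else f (a - 1))" using False unfolding g_def by simp
            moreover have "g b = w" using \<open>b = 1\<close> unfolding g_def by simp
            ultimately have "w = (if a = 0 then f 0 else f (a - 1))" using gab by simp
            then show False using w0 wa[of a] a by (simp split: if_splits)
          qed
        qed
      next
        case False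
        have ga: "g a = f (if a = 0 then 0 else a - 1)" using False unfolding g_def by simp
        have gb: "g b = f (if b = 0 then 0 else b - 1)" using False unfolding g_def by simp
        have ia: "(if a = 0 then 0 else a - 1) \<in> {..<2*k}" using a assms(1) by auto
        have ib: "(if b = 0 then 0 else b - 1) \<in> {..<2*k}" using b assms(1) by auto
        have "(if a = 0 then 0 else a - 1) = (if b = 0 then 0 else b - 1)"
          using inj_onD[OF inj _ ia ib] gab ga gb by simp
        then show ?thesis using False by (cases "a = 0"; cases "b = 0") simp_all
      qed
    qed
    show "g ` {..<2 * k + 1} \<subseteq> V"
    proof
      fix x assume "x \<in> g ` {..<2 * k + 1}"
      then obtain n where n: "n < 2*k+1" "x = g n" by auto
      show "x \<in> V"
      proof (cases "n = 1")
        case True then show ?thesis using n sg w(1) unfolding g_def by auto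
      next
        case False
        then have "(if n = 0 then 0 else n - 1) < 2*k" using n assms(1) by auto
        then show ?thesis using fV n False unfolding g_def by (auto split: if_splits)
      qed
    qed
    show "\<forall>n<2 * k + 1. E (g n) (g (Suc n mod (2 * k + 1)))"
    proof (intro allI impI)
      fix n assume n: "n < 2 * k + 1"
      consider "n = 0" | "n = 1" | "n \<ge> 2 \<and> n < 2*k" | "n = 2*k" using n by linarith
      then show "E (g n) (g (Suc n mod (2 * k + 1)))"
      proof cases
        case 1 then show ?thesis using w(1) assms(1) unfolding g_def by simp
      next
        case 2 then show ?thesis using w(2) sg assms(1) unfolding g_def by simp
      next
        case 3
        then have "Suc n mod (2*k+1) = Suc n" by simp
        moreover have "Suc (n - 1) mod (2*k) = n" using 3 by simp
        moreover have "n - 1 < 2*k" using 3 by linarith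
        ultimately show ?thesis using E[of "n - 1"] 3 unfolding g_def by simp
      next
        case 4
        then have "Suc n mod (2*k+1) = 0" by simp
        moreover have "Suc (n - 1) mod (2*k) = 0" using 4 assms(1) by simp
        ultimately show ?thesis using E[of "n - 1"] 4 assms(1) unfolding g_def by simp
      qed
    qed
  qed
  then show False using assms(3) by blast
qed

end
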